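(* Let $(\beta,\gamma)$ be antiferromagnetic and $\lambda>0$. Let $x^*>0$ be the unique positive solution of $x^*=\frac{1+\gamma\lambda(x^* )^2}{\beta+\lambda(x^* )^2}$, let $\omega(R)=\frac{1+\beta\gamma-\beta R-\gamma/R}{1-\beta\gamma}$ and $\omega^*=\omega(x^* )$. For $\tau>0$ let $I'_\tau=\big[x^*-2\tau\frac{|\omega^*|}{1-|\omega^*|},\,x^*+2\tau\frac{|\omega^*|}{1-|\omega^*|}\big]$, and for $R'>0$ let $\phi_{R'}(R)=\frac{1+\gamma\lambda RR'}{\beta+\lambda RR'}$. There exist constants $0<C_{\min}<C_{\max}<1$ and $\tau_0>0$ such that for all $\tau\in(0,\tau_0)$, all $R\in I'_\tau$ and all $R'\in[x^*-\tau,x^*+\tau]$: $$C_{\min}\leq|\phi_{R'}'(R)|\leq C_{\max},\qquad \omega(R)\leq C_{\max},\qquad \phi_{R'}(R)\in I'_\tau,$$ where $\phi_{R'}'$ denotes the derivative with respect to $R$.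
   Context: A pair $(\beta,\gamma)$ with $\beta,\gamma\geq0$ is antiferromagnetic if $\beta\gamma\in[0,1)$ and at least one is nonzero. *)

theory Defs
  imports "HOL-Analysis.Analysis"
begin

definition antiferromagnetic :: "real \<Rightarrow> real \<Rightarrow> bool" where
  "antiferromagnetic \<beta> \<gamma> \<longleftrightarrow> \<beta> \<ge> 0 \<and> \<gamma> \<ge> 0 \<and> 0 \<le> \<beta> * \<gamma> \<and> \<beta> * \<gamma> < 1 \<and> (\<beta> \<noteq> 0 \<or> \<gamma> \<noteq> 0)"

definition omega :: "real \<Rightarrow> real \<Rightarrow> real \<Rightarrow> real" where
  "omega \<beta> \<gamma> R = (1 + \<beta> * \<gamma> - \<beta> * R - \<gamma> / R) / (1 - \<beta> * \<gamma>)"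

definition phi :: "real \<Rightarrow> real \<Rightarrow> real \<Rightarrow> real \<Rightarrow> real \<Rightarrow> real" where
  "phi \<beta> \<gamma> lam R' R = (1 + \<gamma> * lam * R * R') / (\<beta> + lam * R * R')"

definition Iprime :: "real \<Rightarrow> real \<Rightarrow> real \<Rightarrow> real \<Rightarrow> real set" where
  "Iprime \<beta> \<gamma> xs \<tau> =
     (let w = \<bar>omega \<beta> \<gamma> xs\<bar> in {xs - 2 * \<tau> * w / (1 - w) .. xs + 2 * \<tau> * w / (1 - w)})"

end

theory Submission
  imports Defs
begin

lemma deriv_phi:
  assumes "\<beta> + lam*R*R' \<noteq> 0"
  shows "deriv (phi \<beta> \<gamma> lam R') R = lam*R'*(\<beta>*\<gamma>-1)/(\<beta>+lam*R*R')^2"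
proof -
  have f: "((\<lambda>R. 1 + \<gamma>*lam*R*R') has_real_derivative \<gamma>*lam*R') (at R)"
    using DERIV_cmult[OF DERIV_ident, of "\<gamma>*lam*R'" R] DERIV_const
    by (auto intro!: derivative_eq_intros)
  have g: "((\<lambda>R. \<beta> + lam*R*R') has_real_derivative lam*R') (at R)"
    by (auto intro!: derivative_eq_intros)
  have "(phi \<beta> \<gamma> lam R' has_real_derivative
     ((\<gamma>*lam*R') * (\<beta> + lam*R*R') - (lam*R') * (1 + \<gamma>*lam*R*R')) / (\<beta> + lam*R*R') ^ Suc (Suc 0)) (at R)"
    unfolding phi_def using DERIV_quotient[OF f g assms] .
  moreover have "((\<gamma>*lam*R') * (\<beta> + lam*R*R') - (lam*R') * (1 + \<gamma>*lam*R*R')) / (\<beta> + lam*R*R') ^ Suc (Suc 0)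
      = lam*R'*(\<beta>*\<gamma>-1)/(\<beta>+lam*R*R')^2"
    by (simp add: algebra_simps power2_eq_square)
  ultimately show ?thesis by (simp add: DERIV_imp_deriv)
qed

lemma phi_diff:
  fixes \<beta> \<gamma> lam P Q :: real
  assumes "\<beta> + lam*P \<noteq> 0" "\<beta> + lam*Q \<noteq> 0"
  shows "(1 + \<gamma>*lam*P)/(\<beta>+lam*P) - (1 + \<gamma>*lam*Q)/(\<beta>+lam*Q)
     = lam*(Q-P)*(1-\<beta>*\<gamma>)/((\<beta>+lam*P)*(\<beta>+lam*Q))"
  apply (subst diff_frac_eq[OF assms])
  apply (simp add: algebra_simps)
  done

theorem lemma3p3:
  fixes \<beta> \<gamma> lam xs :: real
  assumes af: "antiferromagnetic \<beta> \<gamma>"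
    and lam: "lam > 0"
    and xs_pos: "xs > 0"
    and xs_fix: "xs = (1 + \<gamma> * lam * xs\<^sup>2) / (\<beta> + lam * xs\<^sup>2)"
    and xs_unique: "\<And>x. x > 0 \<Longrightarrow> x = (1 + \<gamma> * lam * x\<^sup>2) / (\<beta> + lam * x\<^sup>2) \<Longrightarrow> x = xs"
  shows "\<exists>Cmin Cmax \<tau>0. 0 < Cmin \<and> Cmin < Cmax \<and> Cmax < 1 \<and> \<tau>0 > 0 \<and>
    (\<forall>\<tau>. 0 < \<tau> \<and> \<tau> < \<tau>0 \<longrightarrow>
      (\<forall>R \<in> Iprime \<beta> \<gamma> xs \<tau>. \<forall>R' \<in> {xs - \<tau> .. xs + \<tau>}.
         Cmin \<le> \<bar>deriv (phi \<beta> \<gamma> lam R') R\<bar> \<and>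
         \<bar>deriv (phi \<beta> \<gamma> lam R') R\<bar> \<le> Cmax \<and>
         omega \<beta> \<gamma> R \<le> Cmax \<and>
         phi \<beta> \<gamma> lam R' R \<in> Iprime \<beta> \<gamma> xs \<tau>))"
proof -
  define x where "x = xs"
  define L where "L = lam * x^2"
  define K where "K = 1 - \<beta>*\<gamma>"
  define D0 where "D0 = \<beta> + L"
  have b0: "\<beta> \<ge> 0" and g0: "\<gamma> \<ge> 0" and K0: "K > 0" and bg: "\<beta> \<noteq> 0 \<or> \<gamma> \<noteq> 0"
    using af unfolding antiferromagnetic_def K_def by auto
  have x0: "x > 0" using xs_pos x_def by simp
  have L0: "L > 0" using lam x0 unfolding L_def by simp
  have D00: "D0 > 0" using L0 b0 D0_def by simp
  have xf: "x = (1 + \<gamma> * lam * x\<^sup>2) / (\<beta> + lam * x\<^sup>2)"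
    using xs_fix unfolding x_def[symmetric] .
  have fx: "x * D0 = 1 + \<gamma>*L"
  proof -
    have D0': "\<beta> + lam * x\<^sup>2 \<noteq> 0" using D00 unfolding D0_def L_def by simp
    have "x * (\<beta> + lam * x\<^sup>2) = (1 + \<gamma> * lam * x\<^sup>2) / (\<beta> + lam * x\<^sup>2) * (\<beta> + lam * x\<^sup>2)"
      using arg_cong[where f="\<lambda>t. t*(\<beta> + lam * x\<^sup>2)", OF xf] .
    also have "\<dots> = 1 + \<gamma> * lam * x\<^sup>2" using D0' by simp
    finally show ?thesis unfolding D0_def L_def by (simp add: mult.assoc)
  qed
  have E1: "D0 * (x - \<gamma>) = K" using fx unfolding D0_def K_def by (simp add: algebra_simps)
  have E2: "L * (x - \<gamma>) = 1 - \<beta>*x" using fx unfolding D0_def by (simp add: algebra_simps)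
  have "0 < x - \<gamma>" using zero_less_mult_pos[of D0 "x-\<gamma>"] E1 D00 K0 by simp
  then have xg: "x > \<gamma>" by simp
  have "0 < L*(x-\<gamma>)" using L0 xg by simp
  then have bx: "1 - \<beta>*x > 0" using E2 by simp
  define w where "w = omega \<beta> \<gamma> xs"
  have w_eq: "w = (1 - \<beta>*x)*(x-\<gamma>)/(x*K)"
    unfolding w_def omega_def K_def x_def using x0 K0 x_def by (simp add: field_simps)
  have w0: "w > 0" using w_eq bx xg x0 K0 by simp
  have w1: "w < 1"
  proof -
    have "\<beta>*(x-\<gamma>)^2 + \<gamma>*K > 0"
    proof (cases "\<gamma> = 0")
      case True then have "\<beta> > 0" using bg b0 by auto
      then show ?thesis using True x0 by simp
    next
      case False then have "\<gamma> > 0" using g0 by simp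
      then show ?thesis using K0 b0 by (simp add: add_nonneg_pos)
    qed
    then have "(1 - \<beta>*x)*(x-\<gamma>) < x*K" unfolding K_def by (simp add: algebra_simps power2_eq_square)
    then show ?thesis using w_eq x0 K0 by simp
  qed
  have w_eq2: "w = lam*x*K/D0^2"
  proof -
    have xg': "x - \<gamma> = K/D0" using E1 D00 by (simp add: field_simps)
    have "w = (L*(x-\<gamma>))*(x-\<gamma>)/(x*K)" using w_eq E2 by simp
    also have "\<dots> = L*K/(x*D0^2)" unfolding xg' using x0 K0 D00
      by (simp add: field_simps power2_eq_square)
    also have "\<dots> = lam*x*K/D0^2" unfolding L_def using x0 by (simp add: field_simps power2_eq_square)
    finally show ?thesis .
  qed

  define c where "c = 2*w/(1-w)"
  have c0: "c > 0" using w0 w1 c_def by simp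
  have cw: "w*(c+1) < c"
  proof -
    have "w*(c+1) = w*(1+w)/(1-w)" unfolding c_def using w1 by (simp add: field_simps)
    also have "\<dots> < 2*w/(1-w)" using w0 w1 by (intro divide_strict_right_mono) (auto simp: algebra_simps)
    also have "\<dots> = c" unfolding c_def ..
    finally show ?thesis .
  qed
  define Dl where "Dl = (\<lambda>t. \<beta> + lam*(x - c*t)*(x - t))"
  define Dh where "Dh = (\<lambda>t. \<beta> + lam*(x + c*t)*(x + t))"
  define l where "l = (\<lambda>t. lam*(x - t)*K/(Dh t)^2)"
  define u where "u = (\<lambda>t. lam*(x + t)*K/(Dl t)^2)"
  define om where "om = (\<lambda>t. (1 + \<beta>*\<gamma> - \<beta>*(x - c*t) - \<gamma>/(x + c*t))/K)"
  define h where "h = (\<lambda>t. lam*K*(c*(x+t)+x)/(Dl t * D0))"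
  have D0x: "D0 = \<beta> + lam*x*x" unfolding D0_def L_def by (simp add: power2_eq_square)
  have tDl: "(Dl \<longlongrightarrow> D0) (at_right 0)"
  proof -
    have "((\<lambda>t. \<beta> + lam*(x - c*t)*(x - t)) \<longlongrightarrow> \<beta> + lam*(x - c*0)*(x - 0)) (at_right 0)"
      by (intro tendsto_intros)
    then show ?thesis unfolding Dl_def D0x by simp
  qed
  have tDh: "(Dh \<longlongrightarrow> D0) (at_right 0)"
  proof -
    have "((\<lambda>t. \<beta> + lam*(x + c*t)*(x + t)) \<longlongrightarrow> \<beta> + lam*(x + c*0)*(x + 0)) (at_right 0)"
      by (intro tendsto_intros)
    then show ?thesis unfolding Dh_def D0x by simp
  qed
  have tl: "(l \<longlongrightarrow> w) (at_right 0)"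
  proof -
    have "((\<lambda>t. lam*(x - t)*K/(Dh t)^2) \<longlongrightarrow> lam*(x - 0)*K/D0^2) (at_right 0)"
      using D00 by (intro tendsto_intros tDh) auto
    then show ?thesis unfolding l_def w_eq2 by simp
  qed
  have tu: "(u \<longlongrightarrow> w) (at_right 0)"
  proof -
    have "((\<lambda>t. lam*(x + t)*K/(Dl t)^2) \<longlongrightarrow> lam*(x + 0)*K/D0^2) (at_right 0)"
      using D00 by (intro tendsto_intros tDl) auto
    then show ?thesis unfolding u_def w_eq2 by simp
  qed
  have to: "(om \<longlongrightarrow> w) (at_right 0)"
  proof -
    have "((\<lambda>t. (1 + \<beta>*\<gamma> - \<beta>*(x - c*t) - \<gamma>/(x + c*t))/K) \<longlongrightarrow>
        (1 + \<beta>*\<gamma> - \<beta>*(x - c*0) - \<gamma>/(x + c*0))/K) (at_right 0)"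
      using x0 K0 by (intro tendsto_intros) auto
    then show ?thesis unfolding om_def w_def omega_def K_def x_def by simp
  qed
  have th: "(h \<longlongrightarrow> w*(c+1)) (at_right 0)"
  proof -
    have "((\<lambda>t. lam*K*(c*(x+t)+x)/(Dl t * D0)) \<longlongrightarrow> lam*K*(c*(x+0)+x)/(D0 * D0)) (at_right 0)"
      using D00 by (intro tendsto_intros tDl) auto
    moreover have "lam*K*(c*(x+0)+x)/(D0 * D0) = w*(c+1)"
      unfolding w_eq2 by (simp add: power2_eq_square algebra_simps)
    ultimately show ?thesis unfolding h_def by simp
  qed
  have ev1: "eventually (\<lambda>t. x - c*t > 0) (at_right 0)"
  proof -
    have "((\<lambda>t. x - c*t) \<longlongrightarrow> x - c*0) (at_right 0)" by (intro tendsto_intros)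
    then show ?thesis using x0 by (intro order_tendstoD(1)) auto
  qed
  have ev2: "eventually (\<lambda>t. x - t > 0) (at_right 0)"
  proof -
    have "((\<lambda>t. x - t) \<longlongrightarrow> x - 0) (at_right 0)" by (intro tendsto_intros)
    then show ?thesis using x0 by (intro order_tendstoD(1)) auto
  qed
  have ev3: "eventually (\<lambda>t. Dl t > 0) (at_right 0)"
    using tDl D00 by (rule order_tendstoD(1))
  have ev4: "eventually (\<lambda>t. l t > w/2) (at_right 0)"
    using tl by (rule order_tendstoD(1)) (use w0 in simp)
  have ev5: "eventually (\<lambda>t. u t < (1+w)/2) (at_right 0)"
    using tu by (rule order_tendstoD(2)) (use w1 in simp)
  have ev6: "eventually (\<lambda>t. om t < (1+w)/2) (at_right 0)"
    using to by (rule order_tendstoD(2)) (use w1 in simp)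
  have ev7: "eventually (\<lambda>t. h t < c) (at_right 0)"
    using th cw by (rule order_tendstoD(2))
  have "eventually (\<lambda>t. x - c*t > 0 \<and> x - t > 0 \<and> Dl t > 0 \<and> l t > w/2 \<and> u t < (1+w)/2
      \<and> om t < (1+w)/2 \<and> h t < c) (at_right 0)"
    using ev1 ev2 ev3 ev4 ev5 ev6 ev7 by (auto elim: eventually_elim2 intro!: eventually_conj)
  then obtain t0 where t00: "t0 > 0" and t0: "\<And>t. t > 0 \<Longrightarrow> t < t0 \<Longrightarrow> x - c*t > 0 \<and> x - t > 0 \<and>
      Dl t > 0 \<and> l t > w/2 \<and> u t < (1+w)/2 \<and> om t < (1+w)/2 \<and> h t < c"
    unfolding eventually_at_right_field by auto
  have wabs: "\<bar>omega \<beta> \<gamma> xs\<bar> = w" using w0 w_def by simp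
  have Ip: "\<And>t. Iprime \<beta> \<gamma> xs t = {x - c*t .. x + c*t}"
  proof -
    fix t
    have e: "2*t*w/(1-w) = c*t" unfolding c_def by simp
    show "Iprime \<beta> \<gamma> xs t = {x - c*t .. x + c*t}"
      unfolding Iprime_def Let_def wabs e x_def ..
  qed
  have main: "w/2 \<le> \<bar>deriv (phi \<beta> \<gamma> lam R') R\<bar> \<and>
         \<bar>deriv (phi \<beta> \<gamma> lam R') R\<bar> \<le> (1+w)/2 \<and>
         omega \<beta> \<gamma> R \<le> (1+w)/2 \<and>
         phi \<beta> \<gamma> lam R' R \<in> Iprime \<beta> \<gamma> xs \<tau>"
    if tau: "0 < \<tau> \<and> \<tau> < t0" and R: "R \<in> Iprime \<beta> \<gamma> xs \<tau>" and R': "R' \<in> {xs - \<tau>..xs + \<tau>}" for \<tau> R R'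
  proof (intro conjI)
    have tau0: "\<tau> > 0" using tau by simp
    note T = t0[of \<tau>, OF tau0 conjunct2[OF tau]]
    have T1: "x - c*\<tau> > 0" and T2: "x - \<tau> > 0" and T3: "Dl \<tau> > 0" and T4: "l \<tau> > w/2"
      and T5: "u \<tau> < (1+w)/2" and T6: "om \<tau> < (1+w)/2" and T7: "h \<tau> < c"
      using T by auto
    have Rl: "x - c*\<tau> \<le> R" and Ru: "R \<le> x + c*\<tau>" using R Ip by auto
    have R'l: "x - \<tau> \<le> R'" and R'u: "R' \<le> x + \<tau>" using R' x_def by auto
    have R0: "R > 0" using Rl T by linarith
    have R'0: "R' > 0" using R'l T by linarith
    define D where "D = \<beta> + lam*R*R'"
    have lo: "(x - c*\<tau>)*(x - \<tau>) \<le> R*R'" using Rl R'l T by (intro mult_mono) auto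
    have hi: "R*R' \<le> (x + c*\<tau>)*(x + \<tau>)" using Ru R'u R0 R'0 c0 tau0 x0 by (intro mult_mono) auto
    have DDl: "Dl \<tau> \<le> D" unfolding D_def Dl_def using lo lam
      by (simp add: mult.assoc mult_left_mono)
    have DDh: "D \<le> Dh \<tau>" unfolding D_def Dh_def using hi lam
      by (simp add: mult.assoc mult_left_mono)
    have Dpos: "D > 0" using DDl T by linarith
    have dv: "\<bar>deriv (phi \<beta> \<gamma> lam R') R\<bar> = lam*R'*K/D^2"
    proof -
      have d1: "deriv (phi \<beta> \<gamma> lam R') R = lam*R'*(\<beta>*\<gamma>-1)/D^2"
        using deriv_phi[of \<beta> lam R R' \<gamma>] Dpos unfolding D_def by simp
      have d2: "lam*R'*(\<beta>*\<gamma>-1) = -(lam*R'*K)" unfolding K_def by (simp add: algebra_simps)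
      have "deriv (phi \<beta> \<gamma> lam R') R = - (lam*R'*K/D^2)"
        unfolding d1 d2 by (rule minus_divide_left[symmetric])
      then show ?thesis using lam R'0 K0 by simp
    qed
    have "l \<tau> \<le> lam*R'*K/D^2"
    proof -
      have n1: "lam*(x-\<tau>)*K \<le> lam*R'*K"
        using R'l lam K0 by (intro mult_right_mono mult_left_mono) simp_all
      have n2: "0 \<le> lam*R'*K" using lam R'0 K0 by simp
      have d1: "D^2 \<le> (Dh \<tau>)^2" using DDh Dpos by (intro power_mono) simp_all
      have d2: "0 < D^2" using Dpos by simp
      show ?thesis unfolding l_def by (rule frac_le[OF n2 n1 d2 d1])
    qed
    then show "w/2 \<le> \<bar>deriv (phi \<beta> \<gamma> lam R') R\<bar>" using dv T4 by linarith
    have "lam*R'*K/D^2 \<le> u \<tau>"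
    proof -
      have n1: "lam*R'*K \<le> lam*(x+\<tau>)*K"
        using R'u lam K0 by (intro mult_right_mono mult_left_mono) simp_all
      have n2: "0 \<le> lam*(x+\<tau>)*K" using lam x0 tau0 K0 by simp
      have d1: "(Dl \<tau>)^2 \<le> D^2" using DDl T3 by (intro power_mono) simp_all
      have d2: "0 < (Dl \<tau>)^2" using T3 by simp
      show ?thesis unfolding u_def by (rule frac_le[OF n2 n1 d2 d1])
    qed
    then show "\<bar>deriv (phi \<beta> \<gamma> lam R') R\<bar> \<le> (1+w)/2" using dv T5 by linarith
    have "omega \<beta> \<gamma> R \<le> om \<tau>"
    proof -
      have a: "\<beta>*(x - c*\<tau>) \<le> \<beta>*R" using Rl b0 by (rule mult_left_mono)
      have b: "\<gamma>/(x + c*\<tau>) \<le> \<gamma>/R" using Ru g0 R0 by (intro divide_left_mono) simp_all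
      have n: "1 + \<beta>*\<gamma> - \<beta>*R - \<gamma>/R \<le> 1 + \<beta>*\<gamma> - \<beta>*(x - c*\<tau>) - \<gamma>/(x + c*\<tau>)"
        using a b by linarith
      have "K \<ge> 0" using K0 by simp
      from divide_right_mono[OF n this] show ?thesis unfolding omega_def om_def K_def .
    qed
    then show "omega \<beta> \<gamma> R \<le> (1+w)/2" using T6 by linarith
    have xfix: "x = (1 + \<gamma>*lam*(x*x))/(\<beta> + lam*(x*x))"
      using xs_fix unfolding x_def[symmetric] power2_eq_square .
    have EQ: "phi \<beta> \<gamma> lam R' R - x = lam*(x*x - R*R')*K/(D*D0)"
    proof -
      have "phi \<beta> \<gamma> lam R' R - x = (1 + \<gamma>*lam*(R*R'))/(\<beta>+lam*(R*R')) - (1 + \<gamma>*lam*(x*x))/(\<beta> + lam*(x*x))"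
      proof -
        have P1: "phi \<beta> \<gamma> lam R' R = (1 + \<gamma>*lam*(R*R'))/(\<beta>+lam*(R*R'))"
          unfolding phi_def by (simp add: mult.assoc)
        show ?thesis using P1 xfix by (rule arg_cong2[where f="(-)"])
      qed
      also have "\<dots> = lam*(x*x - R*R')*K/(D*D0)"
        using phi_diff[of \<beta> lam "R*R'" "x*x" \<gamma>] Dpos D00 unfolding D_def D0x K_def
        by (simp add: mult.assoc)
      finally show ?thesis .
    qed
    have BD: "\<bar>lam*(x*x - R*R')*K/(D*D0)\<bar> \<le> \<tau> * h \<tau>"
    proof -
      have e: "x*x - R*R' = (x - R)*R' + x*(x - R')" by (simp add: algebra_simps)
      have "\<bar>x*x - R*R'\<bar> \<le> \<bar>x - R\<bar>*R' + x*\<bar>x - R'\<bar>"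
      proof -
        have a1: "\<bar>(x-R)*R'\<bar> = \<bar>x-R\<bar>*R'" using R'0 by (simp add: abs_mult)
        have a2: "\<bar>x*(x-R')\<bar> = x*\<bar>x-R'\<bar>" using x0 by (simp add: abs_mult)
        show ?thesis unfolding e using abs_triangle_ineq[of "(x-R)*R'" "x*(x-R')"] a1 a2 by linarith
      qed
      also have "\<dots> \<le> (c*\<tau>)*(x+\<tau>) + x*\<tau>"
        using Rl Ru R'l R'u R'0 x0 c0 tau0 by (intro add_mono mult_mono mult_left_mono) auto
      finally have A: "\<bar>x*x - R*R'\<bar> \<le> (c*\<tau>)*(x+\<tau>) + x*\<tau>" .
      have "\<bar>lam*(x*x - R*R')*K/(D*D0)\<bar> = lam*K*\<bar>x*x - R*R'\<bar>/(D*D0)"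
        using lam K0 Dpos D00 by (simp add: abs_mult)
      also have "\<dots> \<le> lam*K*((c*\<tau>)*(x+\<tau>) + x*\<tau>)/(Dl \<tau>*D0)"
      proof (rule frac_le)
        show "0 \<le> lam*K*((c*\<tau>)*(x+\<tau>) + x*\<tau>)" using lam K0 c0 tau0 x0 by simp
        show "lam*K*\<bar>x*x - R*R'\<bar> \<le> lam*K*((c*\<tau>)*(x+\<tau>) + x*\<tau>)"
          using A lam K0 by (intro mult_left_mono) simp_all
        show "0 < Dl \<tau>*D0" using T3 D00 by simp
        show "Dl \<tau>*D0 \<le> D*D0" using DDl D00 by (intro mult_right_mono) simp_all
      qed
      also have "\<dots> = \<tau> * h \<tau>" unfolding h_def by (simp add: algebra_simps)
      finally show ?thesis .
    qed
    have "\<tau> * h \<tau> \<le> \<tau> * c" using T7 tau0 by simp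
    then have "\<bar>phi \<beta> \<gamma> lam R' R - x\<bar> \<le> \<tau> * c" unfolding EQ using BD by linarith
    then show "phi \<beta> \<gamma> lam R' R \<in> Iprime \<beta> \<gamma> xs \<tau>" unfolding Ip by (simp add: abs_le_iff algebra_simps)
  qed
  have ALL: "\<forall>\<tau>. 0 < \<tau> \<and> \<tau> < t0 \<longrightarrow>
      (\<forall>R \<in> Iprime \<beta> \<gamma> xs \<tau>. \<forall>R' \<in> {xs - \<tau> .. xs + \<tau>}.
         w/2 \<le> \<bar>deriv (phi \<beta> \<gamma> lam R') R\<bar> \<and>
         \<bar>deriv (phi \<beta> \<gamma> lam R') R\<bar> \<le> (1+w)/2 \<and>
         omega \<beta> \<gamma> R \<le> (1+w)/2 \<and>
         phi \<beta> \<gamma> lam R' R \<in> Iprime \<beta> \<gamma> xs \<tau>)"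
  proof (intro allI impI ballI)
    fix \<tau> R R'
    assume "0 < \<tau> \<and> \<tau> < t0" "R \<in> Iprime \<beta> \<gamma> xs \<tau>" "R' \<in> {xs - \<tau> .. xs + \<tau>}"
    then show "w/2 \<le> \<bar>deriv (phi \<beta> \<gamma> lam R') R\<bar> \<and>
         \<bar>deriv (phi \<beta> \<gamma> lam R') R\<bar> \<le> (1+w)/2 \<and>
         omega \<beta> \<gamma> R \<le> (1+w)/2 \<and>
         phi \<beta> \<gamma> lam R' R \<in> Iprime \<beta> \<gamma> xs \<tau>" by (rule main)
  qed
  have c1: "0 < w/2" "w/2 < (1+w)/2" "(1+w)/2 < 1" "0 < t0" using w0 w1 t00 by auto
  show ?thesis
    apply (rule exI[of _ "w/2"], rule exI[of _ "(1+w)/2"], rule exI[of _ t0])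
    using c1 ALL by (intro conjI)
qed

end
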